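(* Consider the system of interacting Bernoulli processes $\{(X_{t,h})_{t\geq1}: h\in\mathcal H\}$ defined in the context, with $\mathcal H$ a finite set of $N$ elements, parameters $\theta_h>0$, $c\geq\theta_h$, and interaction matrix $\Gamma=(\gamma_{j,h})_{j,h\in\mathcal H}$ satisfying: (A1) $\Gamma$ is non-negative and $\sum_{j\in\mathcal H}\gamma_{j,h}\le 1$ for each $h$; (A2) $\Gamma$ is irreducible. Let $\mathbf Y_n=(Y_{n,k})_{k\in\mathcal H}$, $n\ge1$, be random vectors such that exactly one component of $\mathbf Y_n$ equals $1$ and the others equal $0$, and assume (A3): $\mathbf Y_n$ is independent of $\mathbf X_n=(X_{n,h})_{h\in\mathcal H}$ and of all the past up to time $n-1$, with $P(Y_{n,k}=1)=\pi_k\in(0,1)$, $\sum_{k\in\mathcal H}\pi_k=1$. Set $S_{t,k,h}=\sum_{n=1}^t X_{n,h}Y_{n,k}$. Denote by $\gamma^*\in(0,1]$ the Perron–Frobenius eigenvalue of $\Gamma$ and let $S_{\infty,h}$ be the almost sure limit of $S_{t,h}/t^{\gamma^*}$ (a finite strictly positive random variable), where $S_{t,h}=\sum_{n=1}^tX_{n,h}$. Then, for each pair $h,k\in\mathcal H$, $$\frac{S_{t,k,h}}{t^{\gamma^*}}\longrightarrow \pi_kS_{\infty,h}\quad\text{almost surely},$$ and hence $S_{t,k,h}/S_{t,j,h}\to\pi_k/\pi_j$ almost surely for all $k,j,h\in\mathcal H$.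
   Context: Model: For $t\geq 0$, given the past up to time $t$, the random variables $X_{t+1,h}\in\{0,1\}$, $h\in\mathcal H$, are conditionally independent with $$P(X_{t+1,h}=1\mid \text{past up to } t)=\frac{\theta_h+\sum_{j\in\mathcal H}\gamma_{j,h}S_{t,j}}{c+t},\qquad S_{t,j}=\sum_{n=1}^t X_{n,j}.$$ Irreducibility of $\Gamma$ means the directed graph with weighted adjacency matrix $\Gamma$ is strongly connected. (In the application, $Y_{n,k}=1$ indicates that item $n$ belongs to category $k$.) *)

theory Defs
  imports "HOL-Probability.Probability"
begin

definition is_eigenvalue :: "('h::finite \<Rightarrow> 'h \<Rightarrow> real) \<Rightarrow> complex \<Rightarrow> bool" where
  "is_eigenvalue G \<mu> \<longleftrightarrow>
     (\<exists>v :: 'h \<Rightarrow> complex. v \<noteq> (\<lambda>_. 0) \<and>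
        (\<forall>j. (\<Sum>h\<in>UNIV. complex_of_real (G j h) * v h) = \<mu> * v j))"

text \<open>Perron--Frobenius eigenvalue = spectral radius.\<close>
definition pf_eigenvalue :: "('h::finite \<Rightarrow> 'h \<Rightarrow> real) \<Rightarrow> real" where
  "pf_eigenvalue G = Max {cmod \<mu> | \<mu>. is_eigenvalue G \<mu>}"

text \<open>Irreducible: the directed graph with an edge j -> h iff G j h > 0 is strongly connected
  (every ordered pair, including j = h, joined by a nonempty path).\<close>
definition irreducible_mat :: "('h \<Rightarrow> 'h \<Rightarrow> real) \<Rightarrow> bool" where
  "irreducible_mat G \<longleftrightarrow> (\<forall>j h. (j, h) \<in> {(a, b). G a b > 0}\<^sup>+)"

definition past_event ::
  "'a measure \<Rightarrow> (nat \<Rightarrow> 'h \<Rightarrow> 'a \<Rightarrow> real) \<Rightarrow> (nat \<Rightarrow> 'h \<Rightarrow> 'a \<Rightarrow> real)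
   \<Rightarrow> nat \<Rightarrow> (nat \<Rightarrow> 'h \<Rightarrow> real) \<Rightarrow> (nat \<Rightarrow> 'h \<Rightarrow> real) \<Rightarrow> 'a set" where
  "past_event M X Y t xs ys =
     {\<omega> \<in> space M. \<forall>n\<in>{1..t}. \<forall>h. X n h \<omega> = xs n h \<and> Y n h \<omega> = ys n h}"

end

theory Submission
  imports Defs "HOL-Real_Asymp.Real_Asymp"
begin


context finite_measure
begin

lemma fv_sets:
  assumes "finite V" "H ` space M \<subseteq> V" "\<And>v. v \<in> V \<Longrightarrow> {\<omega>\<in>space M. H \<omega> = v} \<in> sets M"
  shows "{\<omega>\<in>space M. P (H \<omega>)} \<in> sets M"
proof -
  have "{\<omega>\<in>space M. P (H \<omega>)} = (\<Union>v\<in>{v\<in>V. P v}. {\<omega>\<in>space M. H \<omega> = v})"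
    using assms(2) by auto
  also have "\<dots> \<in> sets M" using assms by (intro sets.finite_UN) auto
  finally show ?thesis .
qed

lemma fv_sum:
  fixes g :: "'b \<Rightarrow> real"
  assumes "finite V" "H ` space M \<subseteq> V"
  shows "\<And>\<omega>. \<omega> \<in> space M \<Longrightarrow> g (H \<omega>) * indicator C \<omega> = (\<Sum>v\<in>V. g v * indicator ({\<omega>\<in>space M. H \<omega> = v} \<inter> C) \<omega>)"
proof -
  fix \<omega> assume w: "\<omega> \<in> space M"
  then have "H \<omega> \<in> V" using assms by auto
  have "(\<Sum>v\<in>V. g v * indicator ({\<omega>\<in>space M. H \<omega> = v} \<inter> C) \<omega>) = 
        (\<Sum>v\<in>{H \<omega>}. g v * indicator ({\<omega>\<in>space M. H \<omega> = v} \<inter> C) \<omega>)"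
    using \<open>H \<omega> \<in> V\<close> assms(1) w by (intro sum.mono_neutral_right) (auto simp: indicator_def)
  also have "\<dots> = g (H \<omega>) * indicator C \<omega>" using w by (simp add: indicator_def)
  finally show "g (H \<omega>) * indicator C \<omega> = (\<Sum>v\<in>V. g v * indicator ({\<omega>\<in>space M. H \<omega> = v} \<inter> C) \<omega>)" by simp
qed

lemma fv_integrable_ind:
  fixes g :: "'b \<Rightarrow> real"
  assumes "finite V" "H ` space M \<subseteq> V" "\<And>v. v \<in> V \<Longrightarrow> {\<omega>\<in>space M. H \<omega> = v} \<in> sets M"
    and C: "C \<in> sets M"
  shows "integrable M (\<lambda>\<omega>. g (H \<omega>) * indicator C \<omega>)"
proof -
  have "integrable M (\<lambda>\<omega>. g v * indicator ({\<omega>\<in>space M. H \<omega> = v} \<inter> C) \<omega>)" if "v \<in> V" for v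
    using assms that emeasure_finite by (intro integrable_mult_right integrable_real_indicator) (auto simp: less_top[symmetric])
  then have "integrable M (\<lambda>\<omega>. \<Sum>v\<in>V. g v * indicator ({\<omega>\<in>space M. H \<omega> = v} \<inter> C) \<omega>)"
    by (rule Bochner_Integration.integrable_sum)
  then show ?thesis
    using Bochner_Integration.integrable_cong[OF refl, of M "\<lambda>\<omega>. g (H \<omega>) * indicator C \<omega>" "\<lambda>\<omega>. \<Sum>v\<in>V. g v * indicator ({\<omega>\<in>space M. H \<omega> = v} \<inter> C) \<omega>"]
      fv_sum[OF assms(1,2)] by simp
qed

lemma fv_integrable:
  fixes g :: "'b \<Rightarrow> real"
  assumes "finite V" "H ` space M \<subseteq> V" "\<And>v. v \<in> V \<Longrightarrow> {\<omega>\<in>space M. H \<omega> = v} \<in> sets M"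
  shows "integrable M (\<lambda>\<omega>. g (H \<omega>))"
proof -
  have "integrable M (\<lambda>\<omega>. g (H \<omega>) * indicator (space M) \<omega>)"
    by (rule fv_integrable_ind[OF assms]) auto
  moreover have "\<And>\<omega>. \<omega> \<in> space M \<Longrightarrow> g (H \<omega>) * indicator (space M) \<omega> = g (H \<omega>)" by simp
  ultimately show ?thesis using Bochner_Integration.integrable_cong[OF refl, of M "\<lambda>\<omega>. g (H \<omega>) * indicator (space M) \<omega>" "\<lambda>\<omega>. g (H \<omega>)"] by simp
qed

lemma fv_integral_ind:
  fixes g :: "'b \<Rightarrow> real"
  assumes "finite V" "H ` space M \<subseteq> V" "\<And>v. v \<in> V \<Longrightarrow> {\<omega>\<in>space M. H \<omega> = v} \<in> sets M"
    and C: "C \<in> sets M"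
  shows "(\<integral>\<omega>. g (H \<omega>) * indicator C \<omega> \<partial>M) = (\<Sum>v\<in>V. g v * measure M ({\<omega>\<in>space M. H \<omega> = v} \<inter> C))"
proof -
  have "(\<integral>\<omega>. g (H \<omega>) * indicator C \<omega> \<partial>M) = (\<integral>\<omega>. (\<Sum>v\<in>V. g v * indicator ({\<omega>\<in>space M. H \<omega> = v} \<inter> C) \<omega>) \<partial>M)"
    by (rule Bochner_Integration.integral_cong[OF refl]) (use fv_sum[OF assms(1,2)] in auto)
  also have "\<dots> = (\<Sum>v\<in>V. g v * measure M ({\<omega>\<in>space M. H \<omega> = v} \<inter> C))"
  proof -
    have I: "integrable M (\<lambda>\<omega>. g v * indicator ({\<omega>\<in>space M. H \<omega> = v} \<inter> C) \<omega>)" if "v \<in> V" for v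
      using assms that emeasure_finite by (intro integrable_mult_right integrable_real_indicator) (auto simp: less_top[symmetric])
    have "(\<integral>\<omega>. (\<Sum>v\<in>V. g v * indicator ({\<omega>\<in>space M. H \<omega> = v} \<inter> C) \<omega>) \<partial>M)
        = (\<Sum>v\<in>V. (\<integral>\<omega>. g v * indicator ({\<omega>\<in>space M. H \<omega> = v} \<inter> C) \<omega> \<partial>M))"
      by (rule Bochner_Integration.integral_sum) (rule I)
    also have "\<dots> = (\<Sum>v\<in>V. g v * measure M ({\<omega>\<in>space M. H \<omega> = v} \<inter> C))"
      using assms by (intro sum.cong refl) simp
    finally show ?thesis .
  qed
  finally show ?thesis .
qed

lemma fv_measure:
  assumes "finite V" "H ` space M \<subseteq> V" "\<And>v. v \<in> V \<Longrightarrow> {\<omega>\<in>space M. H \<omega> = v} \<in> sets M"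
    and C: "C \<in> sets M"
  shows "measure M ({\<omega>\<in>space M. P (H \<omega>)} \<inter> C) = (\<Sum>v\<in>{v\<in>V. P v}. measure M ({\<omega>\<in>space M. H \<omega> = v} \<inter> C))"
proof -
  have S: "{\<omega>\<in>space M. P (H \<omega>)} \<in> sets M" by (rule fv_sets[OF assms(1-3)])
  have "measure M ({\<omega>\<in>space M. P (H \<omega>)} \<inter> C) = (\<integral>\<omega>. (of_bool (P (H \<omega>))::real) * indicator C \<omega> \<partial>M)"
  proof -
    have "measure M ({\<omega>\<in>space M. P (H \<omega>)} \<inter> C) = (\<integral>\<omega>. indicator ({\<omega>\<in>space M. P (H \<omega>)} \<inter> C) \<omega> \<partial>M)"
      using S C by simp
    also have "\<dots> = (\<integral>\<omega>. (of_bool (P (H \<omega>))::real) * indicator C \<omega> \<partial>M)"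
      by (rule Bochner_Integration.integral_cong[OF refl]) (auto simp: indicator_def)
    finally show ?thesis .
  qed
  also have "\<dots> = (\<Sum>v\<in>V. of_bool (P v) * measure M ({\<omega>\<in>space M. H \<omega> = v} \<inter> C))"
    by (rule fv_integral_ind[OF assms])
  also have "\<dots> = (\<Sum>v\<in>{v\<in>V. P v}. measure M ({\<omega>\<in>space M. H \<omega> = v} \<inter> C))"
    using assms(1) by (simp add: sum.inter_filter[symmetric] if_distrib Int_def cong: if_cong)
  finally show ?thesis .
qed

end


definition B01 :: "('h \<Rightarrow> real) set" where "B01 = Pi UNIV (\<lambda>_. {0,1})"
definition PV :: "nat \<Rightarrow> (nat \<Rightarrow> 'h \<Rightarrow> real) set" where "PV t = PiE {1..t} (\<lambda>_. B01)"
definition phist :: "(nat \<Rightarrow> 'h \<Rightarrow> 'a \<Rightarrow> real) \<Rightarrow> (nat \<Rightarrow> 'h \<Rightarrow> 'a \<Rightarrow> real) \<Rightarrow> nat \<Rightarrow> 'a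
   \<Rightarrow> (nat \<Rightarrow> 'h \<Rightarrow> real) \<times> (nat \<Rightarrow> 'h \<Rightarrow> real)" where
  "phist X Y t \<omega> = (restrict (\<lambda>i h. X i h \<omega>) {1..t}, restrict (\<lambda>i h. Y i h \<omega>) {1..t})"
definition hist where "hist X Y n \<omega> = (phist X Y (n - 1) \<omega>, \<lambda>h. X n h \<omega>)"

lemma finite_B01: "finite (B01 :: ('h::finite \<Rightarrow> real) set)"
  unfolding B01_def PiE_UNIV_domain[symmetric] by (rule finite_PiE) auto

lemma finite_PV: "finite (PV t :: (nat \<Rightarrow> 'h::finite \<Rightarrow> real) set)"
  unfolding PV_def by (rule finite_PiE) (auto simp: finite_B01)

definition XP :: "(nat \<Rightarrow> 'h \<Rightarrow> 'a \<Rightarrow> real) \<Rightarrow> 'a \<Rightarrow> nat \<Rightarrow> 'h \<Rightarrow> real" where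
  "XP Z \<omega> = (\<lambda>i h. Z i h \<omega>)"
definition Xr :: "nat \<Rightarrow> (((nat \<Rightarrow> 'h \<Rightarrow> real) \<times> (nat \<Rightarrow> 'h \<Rightarrow> real)) \<times> ('h \<Rightarrow> real)) \<Rightarrow> nat \<Rightarrow> 'h \<Rightarrow> real" where
  "Xr n w = (\<lambda>i. if i = n then snd w else fst (fst w) i)"
definition Yr :: "(((nat \<Rightarrow> 'h \<Rightarrow> real) \<times> (nat \<Rightarrow> 'h \<Rightarrow> real)) \<times> ('h \<Rightarrow> real)) \<Rightarrow> nat \<Rightarrow> 'h \<Rightarrow> real" where
  "Yr w = snd (fst w)"

locale ibp = prob_space M for M :: "'a measure" +
  fixes X Y :: "nat \<Rightarrow> 'h::finite \<Rightarrow> 'a \<Rightarrow> real"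
    and \<theta> \<pi> :: "'h \<Rightarrow> real"
    and c :: real
    and \<Gamma> :: "'h \<Rightarrow> 'h \<Rightarrow> real"
  assumes theta_pos: "\<And>h. \<theta> h > 0"
    and c_ge: "\<And>h. c \<ge> \<theta> h"
    and A1_nonneg: "\<And>j h. \<Gamma> j h \<ge> 0"
    and X_meas: "\<And>n h. X n h \<in> borel_measurable M"
    and X_01: "\<And>n h \<omega>. \<omega> \<in> space M \<Longrightarrow> X n h \<omega> \<in> {0, 1}"
    and Y_meas: "\<And>n k. Y n k \<in> borel_measurable M"
    and Y_01: "\<And>n k \<omega>. \<omega> \<in> space M \<Longrightarrow> Y n k \<omega> \<in> {0, 1}"
    and dynamics: "\<And>t xs ys x. (\<forall>h. x h \<in> {0, 1}) \<Longrightarrow>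
         measure M (past_event M X Y t xs ys \<inter> {\<omega> \<in> space M. \<forall>h. X (Suc t) h \<omega> = x h})
         = measure M (past_event M X Y t xs ys) *
           (\<Prod>h\<in>UNIV. (let p = (\<theta> h + (\<Sum>j\<in>UNIV. \<Gamma> j h * (\<Sum>n=1..t. xs n j))) / (c + real t)
                         in if x h = 1 then p else 1 - p))"
    and A3_pi: "\<And>k. 0 < \<pi> k \<and> \<pi> k < 1"
    and A3_indep: "\<And>n xs ys x k. n \<ge> 1 \<Longrightarrow>
         measure M (past_event M X Y (n - 1) xs ys \<inter> {\<omega> \<in> space M. \<forall>h. X n h \<omega> = x h}
                    \<inter> {\<omega> \<in> space M. Y n k \<omega> = 1})
         = \<pi> k * measure M (past_event M X Y (n - 1) xs ys \<inter> {\<omega> \<in> space M. \<forall>h. X n h \<omega> = x h})"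
begin

lemma past_event_sets: "past_event M X Y t xs ys \<in> sets M"
proof -
  have [measurable]: "\<And>n h. X n h \<in> borel_measurable M" "\<And>n h. Y n h \<in> borel_measurable M"
    using X_meas Y_meas by auto
  show ?thesis unfolding past_event_def by measurable
qed

lemma Xeq_sets: "{\<omega> \<in> space M. \<forall>h. X n h \<omega> = x h} \<in> sets M"
proof -
  have [measurable]: "\<And>n h. X n h \<in> borel_measurable M" using X_meas by auto
  show ?thesis by measurable
qed

lemma Yeq_sets: "{\<omega> \<in> space M. Y n k \<omega> = a} \<in> sets M"
proof -
  have [measurable]: "\<And>n h. Y n h \<in> borel_measurable M" using Y_meas by auto
  show ?thesis by measurable
qed

lemma X01': "\<omega> \<in> space M \<Longrightarrow> X n h \<omega> \<noteq> 0 \<Longrightarrow> X n h \<omega> = 1"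
  using X_01 by blast
lemma Y01': "\<omega> \<in> space M \<Longrightarrow> Y n h \<omega> \<noteq> 0 \<Longrightarrow> Y n h \<omega> = 1"
  using Y_01 by blast

lemma phist_range: "phist X Y t ` space M \<subseteq> PV t \<times> PV t"
  using X01' Y01' by (auto simp: phist_def PV_def B01_def)

lemma phist_level:
  assumes "v \<in> PV t \<times> PV t"
  shows "{\<omega>\<in>space M. phist X Y t \<omega> = v} = past_event M X Y t (fst v) (snd v)"
proof -
  obtain xs ys where v: "v = (xs, ys)" by force
  have xs: "xs \<in> extensional {1..t}" and ys: "ys \<in> extensional {1..t}"
    using assms v by (auto simp: PV_def PiE_def)
  have "restrict (\<lambda>i h. X i h \<omega>) {1..t} = xs \<longleftrightarrow> (\<forall>n\<in>{1..t}. \<forall>h. X n h \<omega> = xs n h)" for \<omega>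
    using xs by (auto simp: fun_eq_iff restrict_def extensional_def)
  moreover have "restrict (\<lambda>i h. Y i h \<omega>) {1..t} = ys \<longleftrightarrow> (\<forall>n\<in>{1..t}. \<forall>h. Y n h \<omega> = ys n h)" for \<omega>
    using ys by (auto simp: fun_eq_iff restrict_def extensional_def)
  ultimately show ?thesis by (auto simp: v phist_def past_event_def)
qed

lemma phist_level_sets: "v \<in> PV t \<times> PV t \<Longrightarrow> {\<omega>\<in>space M. phist X Y t \<omega> = v} \<in> sets M"
  using phist_level past_event_sets by simp

definition HV :: "nat \<Rightarrow> (((nat \<Rightarrow> 'h \<Rightarrow> real) \<times> (nat \<Rightarrow> 'h \<Rightarrow> real)) \<times> ('h \<Rightarrow> real)) set" where
  "HV n = (PV (n - 1) \<times> PV (n - 1)) \<times> B01"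

lemma finite_HV: "finite (HV n)"
  unfolding HV_def using finite_PV finite_B01 by auto

lemma hist_range: "hist X Y n ` space M \<subseteq> HV n"
  using phist_range X01' by (auto simp: hist_def HV_def B01_def)

lemma hist_level:
  assumes "w \<in> HV n"
  shows "{\<omega>\<in>space M. hist X Y n \<omega> = w} =
     past_event M X Y (n - 1) (fst (fst w)) (snd (fst w)) \<inter> {\<omega> \<in> space M. \<forall>h. X n h \<omega> = snd w h}"
proof -
  have "fst w \<in> PV (n - 1) \<times> PV (n - 1)" using assms by (auto simp: HV_def)
  have "{\<omega>\<in>space M. hist X Y n \<omega> = w} = {\<omega>\<in>space M. phist X Y (n - 1) \<omega> = fst w} \<inter> {\<omega> \<in> space M. \<forall>h. X n h \<omega> = snd w h}"
    by (cases w) (auto simp: hist_def)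
  with phist_level[OF \<open>fst w \<in> PV (n - 1) \<times> PV (n - 1)\<close>] show ?thesis by simp
qed

lemma hist_level_sets: "w \<in> HV n \<Longrightarrow> {\<omega>\<in>space M. hist X Y n \<omega> = w} \<in> sets M"
  using hist_level past_event_sets Xeq_sets by simp

lemma Y_ind: "\<omega> \<in> space M \<Longrightarrow> Y n k \<omega> = indicator {\<omega> \<in> space M. Y n k \<omega> = 1} \<omega>"
  using Y_01[of \<omega> n k] by (auto simp: indicator_def)

lemma key_hist:
  assumes n: "n \<ge> 1"
  shows "(\<integral>\<omega>. g (hist X Y n \<omega>) * Y n k \<omega> \<partial>M) = \<pi> k * (\<integral>\<omega>. g (hist X Y n \<omega>) \<partial>M)"
proof -
  let ?C = "{\<omega> \<in> space M. Y n k \<omega> = 1}"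
  have "(\<integral>\<omega>. g (hist X Y n \<omega>) * Y n k \<omega> \<partial>M) = (\<integral>\<omega>. g (hist X Y n \<omega>) * indicator ?C \<omega> \<partial>M)"
    by (rule Bochner_Integration.integral_cong[OF refl]) (simp add: Y_ind[symmetric])
  also have "\<dots> = (\<Sum>w\<in>HV n. g w * measure M ({\<omega>\<in>space M. hist X Y n \<omega> = w} \<inter> ?C))"
    by (rule fv_integral_ind[OF finite_HV hist_range hist_level_sets Yeq_sets])
  also have "\<dots> = (\<Sum>w\<in>HV n. g w * (\<pi> k * measure M ({\<omega>\<in>space M. hist X Y n \<omega> = w} \<inter> space M)))"
  proof (intro sum.cong refl)
    fix w assume w: "w \<in> HV n"
    show "g w * measure M ({\<omega>\<in>space M. hist X Y n \<omega> = w} \<inter> ?C) =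
          g w * (\<pi> k * measure M ({\<omega>\<in>space M. hist X Y n \<omega> = w} \<inter> space M))"
      using A3_indep[OF n, of "fst (fst w)" "snd (fst w)" "snd w" k] hist_level[OF w]
      by (simp add: Int_absorb2 past_event_def Int_assoc)
  qed
  also have "\<dots> = \<pi> k * (\<Sum>w\<in>HV n. g w * measure M ({\<omega>\<in>space M. hist X Y n \<omega> = w} \<inter> space M))"
    by (simp add: sum_distrib_left algebra_simps)
  also have "(\<Sum>w\<in>HV n. g w * measure M ({\<omega>\<in>space M. hist X Y n \<omega> = w} \<inter> space M)) =
      (\<integral>\<omega>. g (hist X Y n \<omega>) * indicator (space M) \<omega> \<partial>M)"
    by (rule fv_integral_ind[OF finite_HV hist_range hist_level_sets, symmetric]) (auto intro: sets.top)
  also have "\<dots> = (\<integral>\<omega>. g (hist X Y n \<omega>) \<partial>M)"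
    by (rule Bochner_Integration.integral_cong[OF refl]) simp
  finally show ?thesis .
qed


lemma Xr_hist: "1 \<le> i \<Longrightarrow> i \<le> n \<Longrightarrow> Xr n (hist X Y n \<omega>) i = XP X \<omega> i"
  by (auto simp: Xr_def hist_def phist_def XP_def)
lemma Yr_hist: "1 \<le> i \<Longrightarrow> i < n \<Longrightarrow> Yr (hist X Y n \<omega>) i = XP Y \<omega> i"
  by (auto simp: Yr_def hist_def phist_def XP_def)

lemma key_path:
  fixes F :: "(nat \<Rightarrow> 'h \<Rightarrow> real) \<Rightarrow> (nat \<Rightarrow> 'h \<Rightarrow> real) \<Rightarrow> real"
  assumes n: "n \<ge> 1"
    and loc: "\<And>xf yf xf' yf'. (\<forall>i\<in>{1..n}. xf i = xf' i) \<Longrightarrow> (\<forall>i\<in>{1..<n}. yf i = yf' i) \<Longrightarrow> F xf yf = F xf' yf'"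
  shows "(\<integral>\<omega>. F (XP X \<omega>) (XP Y \<omega>) * Y n k \<omega> \<partial>M) = \<pi> k * (\<integral>\<omega>. F (XP X \<omega>) (XP Y \<omega>) \<partial>M)"
proof -
  have eq: "F (XP X \<omega>) (XP Y \<omega>) = F (Xr n (hist X Y n \<omega>)) (Yr (hist X Y n \<omega>))" for \<omega>
    by (rule loc) (auto simp: Xr_hist Yr_hist)
  show ?thesis unfolding eq by (rule key_hist[OF n])
qed

lemma integrable_path:
  fixes F :: "(nat \<Rightarrow> 'h \<Rightarrow> real) \<Rightarrow> (nat \<Rightarrow> 'h \<Rightarrow> real) \<Rightarrow> real"
  assumes loc: "\<And>xf yf xf' yf'. (\<forall>i\<in>{1..n}. xf i = xf' i \<and> yf i = yf' i) \<Longrightarrow> F xf yf = F xf' yf'"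
  shows "integrable M (\<lambda>\<omega>. F (XP X \<omega>) (XP Y \<omega>))"
proof -
  have eq: "F (XP X \<omega>) (XP Y \<omega>) = F (Xr (Suc n) (hist X Y (Suc n) \<omega>)) (Yr (hist X Y (Suc n) \<omega>))" for \<omega>
    by (rule loc) (auto simp: Xr_hist Yr_hist)
  show ?thesis unfolding eq by (rule fv_integrable[OF finite_HV hist_range hist_level_sets, where g="\<lambda>w. F (Xr (Suc n) w) (Yr w)"])
qed

lemma sets_path:
  assumes loc: "\<And>xf yf xf' yf'. (\<forall>i\<in>{1..n}. xf i = xf' i \<and> yf i = yf' i) \<Longrightarrow> F xf yf = F xf' yf'"
  shows "{\<omega>\<in>space M. F (XP X \<omega>) (XP Y \<omega>)} \<in> sets M"
proof -
  have eq: "F (XP X \<omega>) (XP Y \<omega>) = F (Xr (Suc n) (hist X Y (Suc n) \<omega>)) (Yr (hist X Y (Suc n) \<omega>))" for \<omega>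
    by (rule loc) (auto simp: Xr_hist Yr_hist)
  show ?thesis unfolding eq
    by (rule fv_sets[OF finite_HV hist_range hist_level_sets, where P="\<lambda>w. F (Xr (Suc n) w) (Yr w)"])
qed

end

definition Sp :: "'h \<Rightarrow> (nat \<Rightarrow> 'h \<Rightarrow> real) \<Rightarrow> nat \<Rightarrow> real" where
  "Sp h xf t = (\<Sum>n=1..t. xf n h)"
definition Ap :: "'h \<Rightarrow> real \<Rightarrow> (nat \<Rightarrow> 'h \<Rightarrow> real) \<Rightarrow> nat \<Rightarrow> real" where
  "Ap h m xf n = (if Sp h xf n \<le> m then xf n h else 0)"
definition Wp :: "'h \<Rightarrow> 'h \<Rightarrow> real \<Rightarrow> real \<Rightarrow> nat \<Rightarrow> (nat \<Rightarrow> 'h \<Rightarrow> real) \<Rightarrow> (nat \<Rightarrow> 'h \<Rightarrow> real) \<Rightarrow> real" where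
  "Wp h k p m T xf yf = (\<Sum>n=1..T. Ap h m xf n * (yf n k - p))"

lemma Sp_loc: "(\<forall>i\<in>{1..n}. xf i = xf' i) \<Longrightarrow> t \<le> n \<Longrightarrow> Sp h xf t = Sp h xf' t"
  unfolding Sp_def by (intro sum.cong) auto
lemma Ap_loc: "(\<forall>i\<in>{1..n}. xf i = xf' i) \<Longrightarrow> 1 \<le> t \<Longrightarrow> t \<le> n \<Longrightarrow> Ap h m xf t = Ap h m xf' t"
  unfolding Ap_def using Sp_loc[of n xf xf' t h] by auto
lemma Wp_loc: "(\<forall>i\<in>{1..n}. xf i = xf' i \<and> yf i = yf' i) \<Longrightarrow> T \<le> n \<Longrightarrow> Wp h k p m T xf yf = Wp h k p m T xf' yf'"
  unfolding Wp_def using Ap_loc[of n xf xf'] by (intro sum.cong) auto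

lemma Ap_loc2: "(\<forall>i\<in>{1..n}. xf i = xf' i \<and> yf i = yf' i) \<Longrightarrow> 1 \<le> t \<Longrightarrow> t \<le> n \<Longrightarrow> Ap h m xf t = Ap h m xf' t"
  using Ap_loc[of n xf xf' t h m] by auto
lemma Yp_loc: "(\<forall>i\<in>{1..n}. xf i = xf' i \<and> yf i = yf' i) \<Longrightarrow> 1 \<le> t \<Longrightarrow> t \<le> n \<Longrightarrow> yf t = yf' t"
  by auto

lemma Sp_Suc: "Sp h xf (Suc t) = Sp h xf t + xf (Suc t) h"
  unfolding Sp_def by simp
lemma Wp_Suc: "Wp h k p m (Suc T) xf yf = Wp h k p m T xf yf + Ap h m xf (Suc T) * (yf (Suc T) k - p)"
  unfolding Wp_def by simp

lemma Nc_min: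
  assumes "\<And>i. xf i h \<in> {0,1}" "m \<in> \<nat>" "m \<ge> 0"
  shows "(\<Sum>n=1..T. Ap h m xf n) = min (Sp h xf T) m \<and> Sp h xf T \<in> \<nat>"
proof (induction T)
  case 0
  then show ?case using assms by (simp add: Sp_def)
next
  case (Suc T)
  obtain s where s: "Sp h xf T = real s" using Suc.IH Nats_cases by blast
  obtain mm where mm: "m = real mm" using assms(2) Nats_cases by blast
  have x: "xf (Suc T) h = 0 \<or> xf (Suc T) h = 1" using assms(1) by blast
  show ?case
  proof (cases "xf (Suc T) h = 0")
    case True
    then show ?thesis using Suc.IH by (simp add: Sp_Suc Ap_def)
  next
    case False
    then have x1: "xf (Suc T) h = 1" using x by blast
    have "(\<Sum>n=1..Suc T. Ap h m xf n) = min (Sp h xf T) m + Ap h m xf (Suc T)"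
      using Suc.IH by simp
    also have "\<dots> = min (Sp h xf (Suc T)) m"
      using x1 by (auto simp: Ap_def Sp_Suc s mm)
    finally show ?thesis using x1 by (simp add: Sp_Suc s)
  qed
qed


context ibp
begin

lemma W2_step:
  fixes h k :: 'h and m :: real
  defines "W \<equiv> \<lambda>T \<omega>. Wp h k (\<pi> k) m T (XP X \<omega>) (XP Y \<omega>)"
    and "A \<equiv> \<lambda>n \<omega>. Ap h m (XP X \<omega>) n"
  shows "(\<integral>\<omega>. (W (Suc T) \<omega>)\<^sup>2 \<partial>M) = (\<integral>\<omega>. (W T \<omega>)\<^sup>2 \<partial>M) + (\<integral>\<omega>. (A (Suc T) \<omega> * (Y (Suc T) k \<omega> - \<pi> k))\<^sup>2 \<partial>M)"
proof -
  let ?n = "Suc T"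
  have i1: "integrable M (\<lambda>\<omega>. (W T \<omega>)\<^sup>2)"
    unfolding W_def
    apply (rule integrable_path[where n="Suc T" and F="\<lambda>xf yf. (Wp h k (\<pi> k) m T xf yf)\<^sup>2"])
    subgoal premises a for xf yf xf' yf' by (simp add: Wp_loc[OF a])
    done
  have "integrable M (\<lambda>\<omega>. Wp h k (\<pi> k) m T (XP X \<omega>) (XP Y \<omega>) * Ap h m (XP X \<omega>) (Suc T) * XP Y \<omega> (Suc T) k)"
    apply (rule integrable_path[where n="Suc T" and F="\<lambda>xf yf. Wp h k (\<pi> k) m T xf yf * Ap h m xf (Suc T) * yf (Suc T) k"])
    subgoal premises a for xf yf xf' yf' by (simp add: Wp_loc[OF a] Ap_loc2[OF a] Yp_loc[OF a])
    done
  then have i2: "integrable M (\<lambda>\<omega>. W T \<omega> * A (Suc T) \<omega> * Y (Suc T) k \<omega>)"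
    unfolding W_def A_def by (simp add: XP_def)
  have i3: "integrable M (\<lambda>\<omega>. W T \<omega> * A (Suc T) \<omega>)"
    unfolding W_def A_def
    apply (rule integrable_path[where n="Suc T" and F="\<lambda>xf yf. Wp h k (\<pi> k) m T xf yf * Ap h m xf (Suc T)"])
    subgoal premises a for xf yf xf' yf' by (simp add: Wp_loc[OF a] Ap_loc2[OF a])
    done
  have "integrable M (\<lambda>\<omega>. (Ap h m (XP X \<omega>) (Suc T) * (XP Y \<omega> (Suc T) k - \<pi> k))\<^sup>2)"
    apply (rule integrable_path[where n="Suc T" and F="\<lambda>xf yf. (Ap h m xf (Suc T) * (yf (Suc T) k - \<pi> k))\<^sup>2"])
    subgoal premises a for xf yf xf' yf' by (simp add: Ap_loc2[OF a] Yp_loc[OF a])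
    done
  then have i4: "integrable M (\<lambda>\<omega>. (A (Suc T) \<omega> * (Y (Suc T) k \<omega> - \<pi> k))\<^sup>2)"
    unfolding A_def by (simp add: XP_def)
  have "(\<integral>\<omega>. Wp h k (\<pi> k) m T (XP X \<omega>) (XP Y \<omega>) * Ap h m (XP X \<omega>) (Suc T) * Y (Suc T) k \<omega> \<partial>M) = 
      \<pi> k * (\<integral>\<omega>. Wp h k (\<pi> k) m T (XP X \<omega>) (XP Y \<omega>) * Ap h m (XP X \<omega>) (Suc T) \<partial>M)"
    apply (rule key_path[where F="\<lambda>xf yf. Wp h k (\<pi> k) m T xf yf * Ap h m xf (Suc T)"])
    subgoal by simp
    subgoal premises a for xf yf xf' yf' using a 
      by (simp add: Wp_loc[of T xf xf' yf yf'] Ap_loc[of "Suc T" xf xf'])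
    done
  then have key: "(\<integral>\<omega>. W T \<omega> * A (Suc T) \<omega> * Y (Suc T) k \<omega> \<partial>M) = \<pi> k * (\<integral>\<omega>. W T \<omega> * A (Suc T) \<omega> \<partial>M)"
    unfolding W_def A_def .
  have pt: "(W (Suc T) \<omega>)\<^sup>2 = (W T \<omega>)\<^sup>2 + 2 * (W T \<omega> * A (Suc T) \<omega> * Y (Suc T) k \<omega>)
      - 2 * \<pi> k * (W T \<omega> * A (Suc T) \<omega>) + (A (Suc T) \<omega> * (Y (Suc T) k \<omega> - \<pi> k))\<^sup>2" for \<omega>
    unfolding W_def A_def by (simp add: Wp_Suc XP_def power2_eq_square algebra_simps)
  have "(\<integral>\<omega>. (W (Suc T) \<omega>)\<^sup>2 \<partial>M) = (\<integral>\<omega>. (W T \<omega>)\<^sup>2 \<partial>M) + 2 * (\<integral>\<omega>. W T \<omega> * A (Suc T) \<omega> * Y (Suc T) k \<omega> \<partial>M)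
      - 2 * \<pi> k * (\<integral>\<omega>. W T \<omega> * A (Suc T) \<omega> \<partial>M) + (\<integral>\<omega>. (A (Suc T) \<omega> * (Y (Suc T) k \<omega> - \<pi> k))\<^sup>2 \<partial>M)"
    unfolding pt using i1 i2 i3 i4 by simp
  then show ?thesis using key by simp
qed


lemma W2_bound:
  fixes h k :: 'h and m :: real
  assumes m: "m \<in> \<nat>" "m \<ge> 0"
  shows "(\<integral>\<omega>. (Wp h k (\<pi> k) m T (XP X \<omega>) (XP Y \<omega>))\<^sup>2 \<partial>M) \<le> m"
proof -
  define W where "W \<equiv> \<lambda>T \<omega>. Wp h k (\<pi> k) m T (XP X \<omega>) (XP Y \<omega>)"
  define A where "A \<equiv> \<lambda>n \<omega>. Ap h m (XP X \<omega>) n"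
  define N where "N \<equiv> \<lambda>T \<omega>. (\<Sum>n=1..T. Ap h m (XP X \<omega>) n)"
  have iA: "integrable M (A (Suc n))" for n
    unfolding A_def
    apply (rule integrable_path[where n="Suc n" and F="\<lambda>xf yf. Ap h m xf (Suc n)"])
    subgoal premises a for xf yf xf' yf' by (simp add: Ap_loc2[OF a])
    done
  have iN: "integrable M (N T)" for T
    unfolding N_def
    apply (rule integrable_path[where n="T" and F="\<lambda>xf yf. (\<Sum>n=1..T. Ap h m xf n)"])
    subgoal premises a for xf yf xf' yf' by (intro sum.cong refl) (auto simp: Ap_loc2[OF a])
    done
  have i4: "integrable M (\<lambda>\<omega>. (A (Suc T) \<omega> * (Y (Suc T) k \<omega> - \<pi> k))\<^sup>2)" for T
  proof -
    have "integrable M (\<lambda>\<omega>. (Ap h m (XP X \<omega>) (Suc T) * (XP Y \<omega> (Suc T) k - \<pi> k))\<^sup>2)"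
      apply (rule integrable_path[where n="Suc T" and F="\<lambda>xf yf. (Ap h m xf (Suc T) * (yf (Suc T) k - \<pi> k))\<^sup>2"])
      subgoal premises a for xf yf xf' yf' by (simp add: Ap_loc2[OF a] Yp_loc[OF a])
      done
    then show ?thesis unfolding A_def by (simp add: XP_def)
  qed
  have pt: "(A (Suc T) \<omega> * (Y (Suc T) k \<omega> - \<pi> k))\<^sup>2 \<le> A (Suc T) \<omega>" if w: "\<omega> \<in> space M" for T \<omega>
  proof -
    have "(Y (Suc T) k \<omega> - \<pi> k)\<^sup>2 \<le> 1"
      using Y_01[OF w, of "Suc T" k] A3_pi[of k] by (auto simp: power2_eq_square algebra_simps)
         (smt (verit) mult_less_cancel_right2)
    moreover have "A (Suc T) \<omega> = 0 \<or> A (Suc T) \<omega> = 1"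
      using X_01[OF w, of "Suc T" h] by (auto simp: A_def Ap_def XP_def)
    ultimately show ?thesis by (auto simp: power_mult_distrib)
  qed
  have claim: "(\<integral>\<omega>. (W T \<omega>)\<^sup>2 \<partial>M) \<le> (\<integral>\<omega>. N T \<omega> \<partial>M)" for T
  proof (induction T)
    case 0
    then show ?case by (simp add: W_def N_def Wp_def)
  next
    case (Suc T)
    have "(\<integral>\<omega>. (W (Suc T) \<omega>)\<^sup>2 \<partial>M) = (\<integral>\<omega>. (W T \<omega>)\<^sup>2 \<partial>M) + (\<integral>\<omega>. (A (Suc T) \<omega> * (Y (Suc T) k \<omega> - \<pi> k))\<^sup>2 \<partial>M)"
      unfolding W_def A_def by (rule W2_step)
    also have "\<dots> \<le> (\<integral>\<omega>. N T \<omega> \<partial>M) + (\<integral>\<omega>. A (Suc T) \<omega> \<partial>M)"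
      by (intro add_mono[OF Suc.IH] integral_mono i4 iA) (auto simp: pt)
    also have "\<dots> = (\<integral>\<omega>. N T \<omega> + A (Suc T) \<omega> \<partial>M)"
      using iN iA by simp
    also have "\<dots> = (\<integral>\<omega>. N (Suc T) \<omega> \<partial>M)"
      by (simp add: N_def A_def)
    finally show ?case .
  qed
  have "(\<integral>\<omega>. N T \<omega> \<partial>M) \<le> (\<integral>\<omega>. m \<partial>M)"
  proof (rule integral_mono[OF iN])
    show "integrable M (\<lambda>\<omega>. m)" by simp
    fix \<omega> assume w: "\<omega> \<in> space M"
    have "\<And>i. XP X \<omega> i h \<in> {0,1}" using X_01[OF w] by (simp add: XP_def)
    from Nc_min[where xf="XP X \<omega>" and h=h, OF this m, of T] show "N T \<omega> \<le> m" by (simp add: N_def)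
  qed
  also have "\<dots> = m" by (simp add: prob_space)
  finally show ?thesis using claim[of T] unfolding W_def by simp
qed


lemma W_sets:
  "{\<omega>\<in>space M. P (Wp h k p m T (XP X \<omega>) (XP Y \<omega>))} \<in> sets M"
  apply (rule sets_path[where n=T and F="\<lambda>xf yf. P (Wp h k p m T xf yf)"])
  subgoal premises a for xf yf xf' yf' by (simp add: Wp_loc[OF a])
  done

lemma W_cheb:
  fixes h k :: 'h and m \<epsilon> :: real
  assumes m: "m \<in> \<nat>" "m > 0" and e: "\<epsilon> > 0"
  shows "measure M {\<omega>\<in>space M. \<bar>Wp h k (\<pi> k) m T (XP X \<omega>) (XP Y \<omega>)\<bar> > \<epsilon> * m} \<le> 1 / (\<epsilon>\<^sup>2 * m)"
proof -
  let ?W = "\<lambda>\<omega>. Wp h k (\<pi> k) m T (XP X \<omega>) (XP Y \<omega>)"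
  have int: "integrable M (\<lambda>\<omega>. (?W \<omega>)\<^sup>2)"
    apply (rule integrable_path[where n="T" and F="\<lambda>xf yf. (Wp h k (\<pi> k) m T xf yf)\<^sup>2"])
    subgoal premises a for xf yf xf' yf' by (simp add: Wp_loc[OF a])
    done
  have pos: "(\<epsilon> * m)\<^sup>2 > 0" using m e by simp
  have "measure M {\<omega>\<in>space M. \<bar>?W \<omega>\<bar> > \<epsilon> * m} \<le> measure M {\<omega>\<in>space M. (?W \<omega>)\<^sup>2 \<ge> (\<epsilon> * m)\<^sup>2}"
  proof (rule finite_measure_mono)
    show "{\<omega>\<in>space M. (?W \<omega>)\<^sup>2 \<ge> (\<epsilon> * m)\<^sup>2} \<in> sets M" by (rule W_sets)
    show "{\<omega>\<in>space M. \<bar>?W \<omega>\<bar> > \<epsilon> * m} \<subseteq> {\<omega>\<in>space M. (?W \<omega>)\<^sup>2 \<ge> (\<epsilon> * m)\<^sup>2}"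
    proof safe
      fix \<omega> assume "\<bar>?W \<omega>\<bar> > \<epsilon> * m"
      then have "(\<epsilon> * m)\<^sup>2 \<le> \<bar>?W \<omega>\<bar>\<^sup>2" using m e by (intro power_mono) auto
      then show "(\<epsilon> * m)\<^sup>2 \<le> (?W \<omega>)\<^sup>2" by simp
    qed
  qed
  also have "\<dots> \<le> (\<integral>\<omega>. (?W \<omega>)\<^sup>2 \<partial>M) / (\<epsilon> * m)\<^sup>2"
    by (rule integral_Markov_inequality_measure[OF int sets.top _ pos]) simp
  also have "\<dots> \<le> m / (\<epsilon> * m)\<^sup>2"
    using W2_bound[OF m(1) less_imp_le[OF m(2)], of h k T] pos by (intro divide_right_mono) auto
  also have "\<dots> = 1 / (\<epsilon>\<^sup>2 * m)" using m by (simp add: power2_eq_square field_simps)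
  finally show ?thesis .
qed

lemma W_BC:
  fixes h k :: 'h and \<epsilon> :: real
  assumes e: "\<epsilon> > 0"
  shows "AE \<omega> in M. eventually (\<lambda>j. \<forall>T0. \<exists>T\<ge>T0.
      \<bar>Wp h k (\<pi> k) (real ((Suc j)\<^sup>2)) T (XP X \<omega>) (XP Y \<omega>)\<bar> \<le> \<epsilon> * real ((Suc j)\<^sup>2)) sequentially"
proof -
  define W where "W \<equiv> \<lambda>j T \<omega>. Wp h k (\<pi> k) (real ((Suc j)\<^sup>2)) T (XP X \<omega>) (XP Y \<omega>)"
  define C where "C \<equiv> \<lambda>j T0. {\<omega>\<in>space M. \<forall>T. T0 \<le> T \<longrightarrow> \<bar>W j T \<omega>\<bar> > \<epsilon> * real ((Suc j)\<^sup>2)}"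
  define E where "E \<equiv> \<lambda>j. {\<omega>\<in>space M. \<exists>T0. \<forall>T. T0 \<le> T \<longrightarrow> \<bar>W j T \<omega>\<bar> > \<epsilon> * real ((Suc j)\<^sup>2)}"
  have Csets: "C j T0 \<in> sets M" for j T0
    unfolding C_def
    by (intro sets.sets_Collect_countable_All sets.sets_Collect_imp) (auto simp: W_def intro: W_sets)
  have Esets: "E j \<in> sets M" for j
    unfolding E_def
    by (intro sets.sets_Collect_countable_Ex sets.sets_Collect_countable_All sets.sets_Collect_imp)
       (auto simp: W_def intro: W_sets)
  have Ebound: "measure M (E j) \<le> 1 / (\<epsilon>\<^sup>2 * real ((Suc j)\<^sup>2))" for j
  proof -
    have Cb: "measure M (C j T0) \<le> 1 / (\<epsilon>\<^sup>2 * real ((Suc j)\<^sup>2))" for T0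
    proof -
      have "measure M (C j T0) \<le> measure M {\<omega>\<in>space M. \<bar>W j T0 \<omega>\<bar> > \<epsilon> * real ((Suc j)\<^sup>2)}"
        by (rule finite_measure_mono) (auto simp: C_def W_def intro: W_sets)
      also have "\<dots> \<le> 1 / (\<epsilon>\<^sup>2 * real ((Suc j)\<^sup>2))"
        unfolding W_def by (rule W_cheb[OF _ _ e]) (auto simp del: of_nat_power of_nat_Suc)
      finally show ?thesis .
    qed
    have inc: "incseq (C j)" unfolding C_def incseq_def by auto
    have EU: "E j = (\<Union>T0. C j T0)" unfolding E_def C_def by auto
    have "(\<lambda>T0. measure M (C j T0)) \<longlonglongrightarrow> measure M (\<Union>T0. C j T0)"
      by (rule finite_Lim_measure_incseq) (use Csets inc in auto)
    then show ?thesis unfolding EU by (rule LIMSEQ_le_const2) (use Cb in auto)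
  qed
  have summ: "summable (\<lambda>j. measure M (E j))"
  proof (rule summable_comparison_test')
    have "summable (\<lambda>j. inverse (real j ^ 2))" by (rule inverse_power_summable) simp
    then have "summable (\<lambda>j. inverse (real (Suc j) ^ 2))" by (subst summable_Suc_iff)
    then show "summable (\<lambda>j. 1 / \<epsilon>\<^sup>2 * inverse (real (Suc j) ^ 2))" by (rule summable_mult)
    fix j :: nat assume "0 \<le> j"
    show "norm (measure M (E j)) \<le> 1 / \<epsilon>\<^sup>2 * inverse (real (Suc j) ^ 2)"
      using Ebound[of j] by (simp add: field_simps)
  qed
  have "AE \<omega> in M. eventually (\<lambda>j. \<omega> \<in> space M - E j) sequentially"
    by (rule borel_cantelli_AE1[OF Esets _ summ]) (simp add: less_top[symmetric])
  then show ?thesis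
    by (rule AE_mp) (auto intro!: AE_I2 elim!: eventually_mono simp: E_def W_def not_less)
qed


end

lemma prod_to_0:
  fixes th c :: real and T :: nat
  assumes th: "th > 0" and c: "c \<ge> th"
  shows "(\<lambda>m. \<Prod>i<m. (1 - th / (c + real (T + i)))) \<longlonglongrightarrow> 0"
proof -
  define a where "a = th / (c + real T + 1)"
  have a: "a > 0" using th c by (simp add: a_def)
  have b: "0 \<le> (\<Prod>i<m. (1 - th / (c + real (T + i)))) \<and> (\<Prod>i<m. (1 - th / (c + real (T + i)))) \<le> exp (- a * ln (real m + 1))" for m
  proof
    have q: "0 < th / (c + real (T + i)) \<and> th / (c + real (T + i)) \<le> 1" for i
      using th c by auto
    show "0 \<le> (\<Prod>i<m. (1 - th / (c + real (T + i))))"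
      using q by (intro prod_nonneg) (simp add: q)
    have "(\<Prod>i<m. (1 - th / (c + real (T + i)))) \<le> (\<Prod>i<m. exp (- (th / (c + real (T + i)))))"
    proof (intro prod_mono conjI)
      fix i show "0 \<le> 1 - th / (c + real (T + i))" using q[of i] by simp
      show "1 - th / (c + real (T + i)) \<le> exp (- (th / (c + real (T + i))))"
        using exp_ge_add_one_self[of "- (th / (c + real (T + i)))"] by simp
    qed
    also have "\<dots> = exp (- (\<Sum>i<m. th / (c + real (T + i))))"
      by (simp add: exp_sum[symmetric] sum_negf)
    also have "\<dots> \<le> exp (- a * ln (real m + 1))"
    proof -
      have "a * ln (real m + 1) \<le> a * harm m" using a ln_le_harm[of m] by simp
      also have "\<dots> = (\<Sum>i<m. a * inverse (real (Suc i)))" by (simp add: harm_altdef sum_distrib_left)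
      also have "\<dots> \<le> (\<Sum>i<m. th / (c + real (T + i)))"
      proof (rule sum_mono)
        fix i
        have cp: "c + real (T + i) > 0" using th c by simp
        have "c + real (T + i) \<le> (c + real T + 1) * real (Suc i)"
          using th c by (simp add: algebra_simps)
        have e: "a * inverse (real (Suc i)) = th / ((c + real T + 1) * real (Suc i))"
          unfolding a_def by (simp add: divide_inverse mult.assoc)
        show "a * inverse (real (Suc i)) \<le> th / (c + real (T + i))"
          unfolding e by (rule divide_left_mono) (use cp th \<open>c + real (T + i) \<le> _\<close> in auto)
      qed
      finally show ?thesis by simp
    qed
    finally show "(\<Prod>i<m. (1 - th / (c + real (T + i)))) \<le> exp (- a * ln (real m + 1))" .
  qed
  have lim: "(\<lambda>m::nat. exp (- a * ln (real m + 1))) \<longlonglongrightarrow> 0" using a by real_asymp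
  show ?thesis
    by (rule tendsto_sandwich[OF _ _ tendsto_const lim]) (use b in auto)
qed


context ibp
begin

lemma dyn0:
  assumes v: "v \<in> PV t \<times> PV t"
  shows "measure M ({\<omega>\<in>space M. X (Suc t) h \<omega> = 0} \<inter> {\<omega>\<in>space M. phist X Y t \<omega> = v})
     \<le> (1 - \<theta> h / (c + real t)) * measure M {\<omega>\<in>space M. phist X Y t \<omega> = v}"
proof -
  obtain xs ys where xy: "v = (xs, ys)" by force
  let ?P = "past_event M X Y t xs ys"
  have Peq: "{\<omega>\<in>space M. phist X Y t \<omega> = v} = ?P" using phist_level[OF v] xy by simp
  define f :: "'h \<Rightarrow> real \<Rightarrow> real" where "f \<equiv> \<lambda>h' a. (let p = (\<theta> h' + (\<Sum>j\<in>UNIV. \<Gamma> j h' * (\<Sum>n=1..t. xs n j))) / (c + real t)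
                         in if a = 1 then p else 1 - (p::real))"
  define p where "p \<equiv> \<lambda>h'. (\<theta> h' + (\<Sum>j\<in>UNIV. \<Gamma> j h' * (\<Sum>n=1..t. xs n j))) / (c + real t)"
  let ?H = "\<lambda>\<omega>. (\<lambda>h'. X (Suc t) h' \<omega>)"
  have Hrange: "?H ` space M \<subseteq> B01" using X01' by (auto simp: B01_def)
  have Hlev: "{\<omega>\<in>space M. ?H \<omega> = x} = {\<omega>\<in>space M. \<forall>h. X (Suc t) h \<omega> = x h}" for x
    by (auto simp: fun_eq_iff)
  have Hsets: "{\<omega>\<in>space M. ?H \<omega> = x} \<in> sets M" for x unfolding Hlev by (rule Xeq_sets)
  have "measure M ({\<omega>\<in>space M. ?H \<omega> h = 0} \<inter> ?P) = (\<Sum>x\<in>{x\<in>B01. x h = 0}. measure M ({\<omega>\<in>space M. ?H \<omega> = x} \<inter> ?P))"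
    by (rule fv_measure[OF finite_B01 Hrange Hsets past_event_sets])
  also have "\<dots> = (\<Sum>x\<in>{x\<in>B01. x h = 0}. measure M ?P * (\<Prod>h'\<in>UNIV. f h' (x h')))"
  proof (rule sum.cong[OF refl])
    fix x assume x: "x \<in> {x\<in>B01. x h = 0}"
    then have "\<forall>h. x h \<in> {0,1}" by (auto simp: B01_def)
    from dynamics[OF this, of t xs ys] show "measure M ({\<omega>\<in>space M. ?H \<omega> = x} \<inter> ?P) = measure M ?P * (\<Prod>h'\<in>UNIV. f h' (x h'))"
      unfolding Hlev f_def by (simp add: Int_commute)
  qed
  also have "\<dots> = measure M ?P * (\<Sum>x\<in>{x\<in>B01. x h = 0}. (\<Prod>h'\<in>UNIV. f h' (x h')))"
    by (simp add: sum_distrib_left)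
  also have "(\<Sum>x\<in>{x\<in>B01. x h = 0}. (\<Prod>h'\<in>UNIV. f h' (x h'))) = (\<Prod>h'\<in>UNIV. \<Sum>a\<in>(if h' = h then {0} else {0,1}). f h' a)"
  proof -
    have "PiE UNIV (\<lambda>h'. if h' = h then {0} else {0,1::real}) = {x\<in>B01. x h = 0}"
      unfolding PiE_UNIV_domain B01_def by (auto simp: Pi_def split: if_splits)
    then show ?thesis by (subst prod_sum_PiE) auto
  qed
  also have "\<dots> = (\<Prod>h'\<in>UNIV. if h' = h then 1 - p h else 1)"
    by (intro prod.cong refl) (auto simp: f_def p_def Let_def)
  also have "\<dots> = 1 - p h" by (simp add: prod.delta)
  finally have eq: "measure M ({\<omega>\<in>space M. X (Suc t) h \<omega> = 0} \<inter> ?P) = measure M ?P * (1 - p h)" by simp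
  have "\<theta> h / (c + real t) \<le> p h"
  proof -
    have "0 \<le> (\<Sum>j\<in>UNIV. \<Gamma> j h * (\<Sum>n=1..t. xs n j))"
    proof (intro sum_nonneg mult_nonneg_nonneg A1_nonneg)
      fix n j assume "n \<in> {1..t}"
      then have "xs n j = 0 \<or> xs n j = 1" using v xy by (auto simp: PV_def B01_def PiE_def Pi_def)
      then show "0 \<le> xs n j" by auto
    qed
    moreover have "c + real t > 0" using theta_pos[of h] c_ge[of h] by simp
    ultimately show ?thesis unfolding p_def by (intro divide_right_mono) auto
  qed
  then have "measure M ?P * (1 - p h) \<le> measure M ?P * (1 - \<theta> h / (c + real t))"
    by (intro mult_left_mono) auto
  then show ?thesis unfolding Peq using eq by (simp add: mult.commute)
qed

lemma dynU:
  "measure M ({\<omega>\<in>space M. phist X Y t \<omega> \<in> U} \<inter> {\<omega>\<in>space M. X (Suc t) h \<omega> = 0})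
     \<le> (1 - \<theta> h / (c + real t)) * measure M {\<omega>\<in>space M. phist X Y t \<omega> \<in> U}"
proof -
  have Xs: "{\<omega>\<in>space M. X (Suc t) h \<omega> = 0} \<in> sets M"
  proof -
    have [measurable]: "X (Suc t) h \<in> borel_measurable M" by (rule X_meas)
    show ?thesis by measurable
  qed
  have "measure M ({\<omega>\<in>space M. phist X Y t \<omega> \<in> U} \<inter> {\<omega>\<in>space M. X (Suc t) h \<omega> = 0})
      = (\<Sum>v\<in>{v\<in>PV t \<times> PV t. v \<in> U}. measure M ({\<omega>\<in>space M. phist X Y t \<omega> = v} \<inter> {\<omega>\<in>space M. X (Suc t) h \<omega> = 0}))"
    by (rule fv_measure[OF _ phist_range phist_level_sets Xs]) (simp add: finite_PV)
  also have "\<dots> \<le> (\<Sum>v\<in>{v\<in>PV t \<times> PV t. v \<in> U}. (1 - \<theta> h / (c + real t)) * measure M ({\<omega>\<in>space M. phist X Y t \<omega> = v} \<inter> space M))"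
  proof (rule sum_mono)
    fix v assume "v \<in> {v\<in>PV t \<times> PV t. v \<in> U}"
    then have "measure M ({\<omega>\<in>space M. X (Suc t) h \<omega> = 0} \<inter> {\<omega>\<in>space M. phist X Y t \<omega> = v})
     \<le> (1 - \<theta> h / (c + real t)) * measure M {\<omega>\<in>space M. phist X Y t \<omega> = v}" by (intro dyn0) auto
    moreover have "{\<omega>\<in>space M. phist X Y t \<omega> = v} \<inter> space M = {\<omega>\<in>space M. phist X Y t \<omega> = v}" by auto
    ultimately show "measure M ({\<omega>\<in>space M. phist X Y t \<omega> = v} \<inter> {\<omega>\<in>space M. X (Suc t) h \<omega> = 0}) \<le> (1 - \<theta> h / (c + real t)) * measure M ({\<omega>\<in>space M. phist X Y t \<omega> = v} \<inter> space M)"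
      by (simp add: Int_commute)
  qed
  also have "\<dots> = (1 - \<theta> h / (c + real t)) * (\<Sum>v\<in>{v\<in>PV t \<times> PV t. v \<in> U}. measure M ({\<omega>\<in>space M. phist X Y t \<omega> = v} \<inter> space M))"
    by (simp add: sum_distrib_left)
  also have "(\<Sum>v\<in>{v\<in>PV t \<times> PV t. v \<in> U}. measure M ({\<omega>\<in>space M. phist X Y t \<omega> = v} \<inter> space M))
      = measure M ({\<omega>\<in>space M. phist X Y t \<omega> \<in> U} \<inter> space M)"
    by (rule fv_measure[OF _ phist_range phist_level_sets sets.top, symmetric]) (simp add: finite_PV)
  finally show ?thesis by (simp add: Int_absorb2)
qed


lemma E_bound:
  "measure M {\<omega>\<in>space M. \<forall>i\<in>{T<..T+m}. X i h \<omega> = 0} \<le> (\<Prod>i<m. (1 - \<theta> h / (c + real (T + i))))"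
proof (induction m)
  case 0
  then show ?case by (simp add: prob_le_1)
next
  case (Suc m)
  let ?U = "{v. \<forall>i\<in>{T<..T+m}. fst v i h = 0}"
  have q: "0 \<le> 1 - \<theta> h / (c + real (T + m))"
    using theta_pos[of h] c_ge[of h] by simp
  have e1: "{\<omega>\<in>space M. phist X Y (T + m) \<omega> \<in> ?U} = {\<omega>\<in>space M. \<forall>i\<in>{T<..T+m}. X i h \<omega> = 0}"
    by (auto simp: phist_def)
  have e2: "{\<omega>\<in>space M. \<forall>i\<in>{T<..T+Suc m}. X i h \<omega> = 0} =
      {\<omega>\<in>space M. phist X Y (T + m) \<omega> \<in> ?U} \<inter> {\<omega>\<in>space M. X (Suc (T + m)) h \<omega> = 0}"
    unfolding e1 by (auto simp: le_Suc_eq)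
  have "measure M {\<omega>\<in>space M. \<forall>i\<in>{T<..T+Suc m}. X i h \<omega> = 0} \<le>
     (1 - \<theta> h / (c + real (T + m))) * measure M {\<omega>\<in>space M. phist X Y (T + m) \<omega> \<in> ?U}"
    unfolding e2 by (rule dynU)
  also have "\<dots> \<le> (1 - \<theta> h / (c + real (T + m))) * (\<Prod>i<m. (1 - \<theta> h / (c + real (T + i))))"
    unfolding e1 using Suc.IH q by (intro mult_left_mono) auto
  finally show ?case by (simp add: mult.commute)
qed

lemma inf_ones: "AE \<omega> in M. \<forall>T. \<exists>i>T. X i h \<omega> \<noteq> 0"
proof (subst AE_all_countable, intro allI)
  fix T
  let ?N = "{\<omega>\<in>space M. \<forall>i. T < i \<longrightarrow> X i h \<omega> = 0}"
  have [measurable]: "\<And>i. X i h \<in> borel_measurable M" by (rule X_meas)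
  have Ns: "?N \<in> sets M" by measurable
  have "measure M ?N \<le> 0"
  proof (rule LIMSEQ_le_const[OF prod_to_0[of "\<theta> h" c T, OF theta_pos c_ge]])
    show "\<exists>N. \<forall>m\<ge>N. measure M ?N \<le> (\<Prod>i<m. (1 - \<theta> h / (c + real (T + i))))"
    proof (intro exI allI impI)
      fix m
      have "measure M ?N \<le> measure M {\<omega>\<in>space M. \<forall>i\<in>{T<..T+m}. X i h \<omega> = 0}"
        by (rule finite_measure_mono) (auto intro: Xeq_sets)
      then show "measure M ?N \<le> (\<Prod>i<m. (1 - \<theta> h / (c + real (T + i))))"
        using E_bound[of T m h] by linarith
    qed
  qed
  then have "emeasure M ?N = 0" by (simp add: emeasure_eq_measure measure_nonneg antisym)
  then show "AE \<omega> in M. \<exists>i>T. X i h \<omega> \<noteq> 0"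
    by (subst AE_iff_measurable[OF Ns]) auto
qed

end

lemma Sp_mono:
  assumes "\<And>i. xf i h \<in> {0,1}" "t \<le> t'"
  shows "Sp h xf t \<le> Sp h xf t'"
proof -
  have "Sp h xf t' = Sp h xf t + (\<Sum>n\<in>{t<..t'}. xf n h)"
    unfolding Sp_def using assms(2)
    by (subst sum.union_disjoint[symmetric]) (auto intro!: sum.cong simp: ivl_disj_un)
  moreover have "(\<Sum>n\<in>{t<..t'}. xf n h) \<ge> 0" using assms(1) by (intro sum_nonneg) (metis insert_iff order_refl singletonD zero_le_one)
  ultimately show ?thesis by simp
qed

lemma Sp_Nats: "(\<And>i. xf i h \<in> {0,1}) \<Longrightarrow> Sp h xf t \<in> \<nat>"
  using Nc_min[of xf h 0 t] by simp

lemma Sp_nonneg: "(\<And>i. xf i h \<in> {0,1}) \<Longrightarrow> Sp h xf t \<ge> 0"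
  using Sp_mono[of xf h 0 t] by (simp add: Sp_def)

lemma D_eq_W:
  assumes x: "\<And>i. xf i h \<in> {0,1}" and tT: "t \<le> T"
  shows "(\<Sum>n=1..t. xf n h * (yf n k - p)) = Wp h k p (Sp h xf t) T xf yf"
proof -
  have base: "(\<Sum>n=1..t. xf n h * (yf n k - p)) = Wp h k p (Sp h xf t) t xf yf"
    unfolding Wp_def Ap_def using Sp_mono[where xf=xf and h=h, OF x] by (intro sum.cong) auto
  have "Wp h k p (Sp h xf t) (t + d) xf yf = Wp h k p (Sp h xf t) t xf yf" for d
  proof (induction d)
    case 0 then show ?case by simp
  next
    case (Suc d)
    have "Ap h (Sp h xf t) xf (Suc (t + d)) = 0"
    proof (cases "xf (Suc (t + d)) h = 0")
      case False
      then have "xf (Suc (t + d)) h = 1" using x by blast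
      moreover have "Sp h xf t \<le> Sp h xf (t + d)" using Sp_mono[where xf=xf and h=h, OF x] by simp
      ultimately show ?thesis by (auto simp: Ap_def Sp_Suc)
    qed (simp add: Ap_def)
    then show ?case using Suc.IH by (simp add: Wp_Suc)
  qed
  from this[of "T - t"] base tT show ?thesis by simp
qed

lemma W_diff:
  assumes x: "\<And>i. xf i h \<in> {0,1}" and y: "\<And>i. yf i k \<in> {0,1}" and p: "0 < p" "p < 1"
    and m: "m \<in> \<nat>" "m' \<in> \<nat>" "0 \<le> m'" "m' \<le> m"
  shows "\<bar>Wp h k p m T xf yf - Wp h k p m' T xf yf\<bar> \<le> m - m'"
proof -
  have "\<bar>Wp h k p m T xf yf - Wp h k p m' T xf yf\<bar> = \<bar>\<Sum>n=1..T. (Ap h m xf n - Ap h m' xf n) * (yf n k - p)\<bar>"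
    unfolding Wp_def by (simp add: sum_subtractf[symmetric] algebra_simps)
  also have "\<dots> \<le> (\<Sum>n=1..T. \<bar>(Ap h m xf n - Ap h m' xf n) * (yf n k - p)\<bar>)" by (rule sum_abs)
  also have "\<dots> \<le> (\<Sum>n=1..T. (Ap h m xf n - Ap h m' xf n))"
  proof (rule sum_mono)
    fix n
    have z: "\<bar>yf n k - p\<bar> \<le> 1" using y[of n] p by auto
    have "0 \<le> Ap h m xf n - Ap h m' xf n" using x[of n] m by (auto simp: Ap_def)
    then show "\<bar>(Ap h m xf n - Ap h m' xf n) * (yf n k - p)\<bar> \<le> Ap h m xf n - Ap h m' xf n"
      using z by (simp add: abs_mult mult_left_le)
  qed
  also have "\<dots> = min (Sp h xf T) m - min (Sp h xf T) m'"
    using Nc_min[where xf=xf and h=h, OF x m(1) order.trans[OF m(3,4)], of T] Nc_min[where xf=xf and h=h, OF x m(2,3), of T] m by (simp add: sum_subtractf)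
  also have "\<dots> \<le> m - m'" using m by linarith
  finally show ?thesis .
qed

lemma det_inf:
  assumes x: "\<And>i. xf i h \<in> {0,1}" and inf: "\<forall>T. \<exists>i>T. xf i h \<noteq> 0"
  shows "filterlim (Sp h xf) at_top sequentially"
proof -
  have ex: "\<exists>t. Sp h xf t \<ge> real m" for m
  proof (induction m)
    case 0 then show ?case using Sp_nonneg[where xf=xf and h=h, OF x] by auto
  next
    case (Suc m)
    then obtain t where t: "Sp h xf t \<ge> real m" by blast
    obtain i where i: "i > t" "xf i h \<noteq> 0" using inf by blast
    then have x1: "xf i h = 1" using x by blast
    obtain i' where i': "i = Suc i'" using i by (cases i) auto
    have "Sp h xf t \<le> Sp h xf i'" using i i' by (intro Sp_mono[where xf=xf and h=h, OF x]) auto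
    then have "Sp h xf i \<ge> real (Suc m)" using t x1 i' by (simp add: Sp_Suc)
    then show ?case by blast
  qed
  show ?thesis unfolding filterlim_at_top
  proof
    fix Z :: real
    obtain m :: nat where "Z \<le> real m" using real_arch_simple by blast
    obtain t where "Sp h xf t \<ge> real m" using ex by blast
    then have "\<forall>t'\<ge>t. Z \<le> Sp h xf t'"
      using \<open>Z \<le> real m\<close> Sp_mono[where xf=xf and h=h, OF x] by (meson order_trans)
    then show "eventually (\<lambda>t. Z \<le> Sp h xf t) sequentially" unfolding eventually_sequentially by blast
  qed
qed

lemma det_main:
  assumes x: "\<And>i. xf i h \<in> {0,1}" and y: "\<And>i. yf i k \<in> {0,1}" and p: "0 < p" "p < 1"
    and lim: "filterlim (Sp h xf) at_top sequentially"
    and bc: "\<And>j::nat. eventually (\<lambda>jj. \<forall>T0. \<exists>T\<ge>T0.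
        \<bar>Wp h k p (real ((Suc jj)\<^sup>2)) T xf yf\<bar> \<le> 1 / real (Suc j) * real ((Suc jj)\<^sup>2)) sequentially"
  shows "(\<lambda>t. (\<Sum>n=1..t. xf n h * (yf n k - p)) / Sp h xf t) \<longlonglongrightarrow> 0"
proof (rule tendstoI)
  fix e :: real assume e: "e > 0"
  obtain j where j: "inverse (real (Suc j)) < e / 2" using reals_Archimedean[of "e/2"] e by auto
  define \<epsilon> where "\<epsilon> = 1 / real (Suc j)"
  have ei: "\<epsilon> = inverse (real (Suc j))" unfolding \<epsilon>_def by (rule divide_inverse[of 1, simplified])
  have \<epsilon>: "\<epsilon> < e / 2" "\<epsilon> > 0" using j unfolding ei by auto
  obtain K where K: "\<And>jj. jj \<ge> K \<Longrightarrow> \<forall>T0. \<exists>T\<ge>T0.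
        \<bar>Wp h k p (real ((Suc jj)\<^sup>2)) T xf yf\<bar> \<le> \<epsilon> * real ((Suc jj)\<^sup>2)"
    using bc[of j] unfolding eventually_sequentially \<epsilon>_def by blast
  have ev: "eventually (\<lambda>t. max (real ((K + 1)\<^sup>2)) (16 / e\<^sup>2 + 1) \<le> Sp h xf t) sequentially"
    using lim unfolding filterlim_at_top by blast
  show "eventually (\<lambda>t. dist ((\<Sum>n=1..t. xf n h * (yf n k - p)) / Sp h xf t) 0 < e) sequentially"
  proof (rule eventually_mono[OF ev])
    fix t assume St: "max (real ((K + 1)\<^sup>2)) (16 / e\<^sup>2 + 1) \<le> Sp h xf t"
    define S where "S = Sp h xf t"
    define D where "D = (\<Sum>n=1..t. xf n h * (yf n k - p))"
    define r where "r = sqrt S"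
    define q where "q = nat \<lfloor>r\<rfloor>"
    have S1: "S \<ge> real ((K + 1)\<^sup>2)" "S \<ge> 16 / e\<^sup>2 + 1" using St by (auto simp: S_def)
    have "16 / e\<^sup>2 \<ge> 0" by simp
    then have Spos: "S > 0" using S1(2) by linarith
    have r0: "r \<ge> 0" unfolding r_def using Spos by simp
    have rS: "r\<^sup>2 = S" unfolding r_def by (rule real_sqrt_pow2) (use Spos in linarith)
    have qr: "real q \<le> r" "r < real q + 1" using r0 by (auto simp: q_def)
    have rK: "r \<ge> real (K + 1)"
    proof -
      have "sqrt ((real (K + 1))\<^sup>2) \<le> sqrt S" using S1(1) by (intro real_sqrt_le_mono) simp
      then show ?thesis unfolding r_def by simp
    qed
    have qK: "q \<ge> K + 1" using rK qr unfolding q_def by linarith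
    then obtain jj where jj: "q = Suc jj" "jj \<ge> K" by (cases q) auto
    have q2: "real (q\<^sup>2) \<le> S"
    proof -
      have "(real q)\<^sup>2 \<le> r\<^sup>2" using qr r0 by (intro power_mono) auto
      then show ?thesis using rS by simp
    qed
    obtain T where T: "T \<ge> t" "\<bar>Wp h k p (real (q\<^sup>2)) T xf yf\<bar> \<le> \<epsilon> * real (q\<^sup>2)"
      using K[OF jj(2)] jj(1) by blast
    have DW: "D = Wp h k p S T xf yf" unfolding D_def S_def by (rule D_eq_W[where xf=xf and h=h, OF x T(1)])
    have diff: "\<bar>Wp h k p S T xf yf - Wp h k p (real (q\<^sup>2)) T xf yf\<bar> \<le> S - real (q\<^sup>2)"
      by (rule W_diff[where xf=xf and h=h and yf=yf and k=k, OF x y p]) (use q2 in \<open>auto simp: S_def simp del: of_nat_power intro: Sp_Nats[where xf=xf and h=h, OF x]\<close>)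
    have Sq: "S - real (q\<^sup>2) \<le> 2 * r"
    proof -
      have "S - real (q\<^sup>2) = (r - real q) * (r + real q)" using rS by (simp add: power2_eq_square algebra_simps)
      also have "\<dots> \<le> 1 * (2 * r)" using qr r0 by (intro mult_mono) auto
      finally show ?thesis by simp
    qed
    have "\<bar>D\<bar> \<le> \<epsilon> * real (q\<^sup>2) + 2 * r" using DW diff T(2) Sq by linarith
    also have "\<dots> \<le> \<epsilon> * S + 2 * r" using q2 \<epsilon> by (intro add_mono mult_left_mono) auto
    finally have Db: "\<bar>D\<bar> \<le> \<epsilon> * S + 2 * r" .
    have r4: "r > 4 / e"
    proof -
      have "(4 / e)\<^sup>2 < S" using S1(2) by (simp add: power_divide)
      then have "sqrt ((4/e)\<^sup>2) < r" unfolding r_def by (rule real_sqrt_less_mono)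
      then show ?thesis using e by simp
    qed
    have "4 / e > 0" using e by simp
    then have rpos: "r > 0" using r4 by linarith
    have "\<bar>D / S\<bar> = \<bar>D\<bar> / S" using Spos by simp
    also have "\<dots> \<le> (\<epsilon> * S + 2 * r) / S" using Db Spos by (intro divide_right_mono) auto
    also have "\<dots> = \<epsilon> + 2 / r"
    proof -
      have Srr: "S = r * r" using rS by (simp add: power2_eq_square)
      have "(\<epsilon> * S + 2 * r) / S = \<epsilon> + (2 * r) / (r * r)" using Spos rpos unfolding Srr by (simp add: add_divide_distrib)
      also have "(2 * r) / (r * r) = 2 / r" using rpos by simp
      finally show ?thesis .
    qed
    also have "\<dots> < e / 2 + e / 2"
    proof -
      have "2 / r < e / 2" using r4 e rpos by (simp add: field_simps)
      then show ?thesis using \<epsilon> by linarith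
    qed
    finally show "dist ((\<Sum>n=1..t. xf n h * (yf n k - p)) / Sp h xf t) 0 < e"
      by (simp add: D_def S_def)
  qed
qed

lemma div_cancel_common: "(z::real) \<noteq> 0 \<Longrightarrow> (a / z) / (b / z) = a / b"
  by (cases "b = 0") (simp_all add: field_simps)

theorem theorem3:
  fixes M :: "'a measure"
    and X Y :: "nat \<Rightarrow> 'h::finite \<Rightarrow> 'a \<Rightarrow> real"
    and \<theta> \<pi> :: "'h \<Rightarrow> real"
    and c :: real
    and \<Gamma> :: "'h \<Rightarrow> 'h \<Rightarrow> real"
    and Sinf :: "'h \<Rightarrow> 'a \<Rightarrow> real"
  assumes prob: "prob_space M"
    and theta_pos: "\<And>h. \<theta> h > 0"
    and c_ge: "\<And>h. c \<ge> \<theta> h"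
    and A1_nonneg: "\<And>j h. \<Gamma> j h \<ge> 0"
    and A1_sum: "\<And>h. (\<Sum>j\<in>UNIV. \<Gamma> j h) \<le> 1"
    and A2: "irreducible_mat \<Gamma>"
    and X_meas: "\<And>n h. X n h \<in> borel_measurable M"
    and X_01: "\<And>n h \<omega>. \<omega> \<in> space M \<Longrightarrow> X n h \<omega> \<in> {0, 1}"
    and Y_meas: "\<And>n k. Y n k \<in> borel_measurable M"
    and Y_01: "\<And>n k \<omega>. \<omega> \<in> space M \<Longrightarrow> Y n k \<omega> \<in> {0, 1}"
    and Y_onehot: "\<And>n \<omega>. n \<ge> 1 \<Longrightarrow> \<omega> \<in> space M \<Longrightarrow> (\<exists>!k. Y n k \<omega> = 1)"
    and dynamics: "\<And>t xs ys x. (\<forall>h. x h \<in> {0, 1}) \<Longrightarrow>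
         measure M (past_event M X Y t xs ys \<inter> {\<omega> \<in> space M. \<forall>h. X (Suc t) h \<omega> = x h})
         = measure M (past_event M X Y t xs ys) *
           (\<Prod>h\<in>UNIV. (let p = (\<theta> h + (\<Sum>j\<in>UNIV. \<Gamma> j h * (\<Sum>n=1..t. xs n j))) / (c + real t)
                         in if x h = 1 then p else 1 - p))"
    and A3_pi: "\<And>k. 0 < \<pi> k \<and> \<pi> k < 1"
    and A3_sum: "(\<Sum>k\<in>UNIV. \<pi> k) = 1"
    and A3_indep: "\<And>n xs ys x k. n \<ge> 1 \<Longrightarrow>
         measure M (past_event M X Y (n - 1) xs ys \<inter> {\<omega> \<in> space M. \<forall>h. X n h \<omega> = x h}
                    \<inter> {\<omega> \<in> space M. Y n k \<omega> = 1})
         = \<pi> k * measure M (past_event M X Y (n - 1) xs ys \<inter> {\<omega> \<in> space M. \<forall>h. X n h \<omega> = x h})"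
    and Sinf_lim: "\<And>h. AE \<omega> in M.
         (\<lambda>t. (\<Sum>n=1..t. X n h \<omega>) / real t powr pf_eigenvalue \<Gamma>) \<longlonglongrightarrow> Sinf h \<omega>"
    and Sinf_pos: "\<And>h. AE \<omega> in M. Sinf h \<omega> > 0"
  shows "(\<forall>h k. AE \<omega> in M.
            (\<lambda>t. (\<Sum>n=1..t. X n h \<omega> * Y n k \<omega>) / real t powr pf_eigenvalue \<Gamma>)
              \<longlonglongrightarrow> \<pi> k * Sinf h \<omega>)
       \<and> (\<forall>k j h. AE \<omega> in M.
            (\<lambda>t. (\<Sum>n=1..t. X n h \<omega> * Y n k \<omega>) / (\<Sum>n=1..t. X n h \<omega> * Y n j \<omega>))
              \<longlonglongrightarrow> \<pi> k / \<pi> j)"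
proof -
  interpret I: ibp M X Y \<theta> \<pi> c \<Gamma>
    by (intro ibp.intro prob ibp_axioms.intro) (fact theta_pos c_ge A1_nonneg X_meas X_01 Y_meas Y_01 dynamics A3_pi A3_indep)+
  let ?g = "pf_eigenvalue \<Gamma>"
  have P1: "AE \<omega> in M.
            (\<lambda>t. (\<Sum>n=1..t. X n h \<omega> * Y n k \<omega>) / real t powr ?g) \<longlonglongrightarrow> \<pi> k * Sinf h \<omega>" for h k
  proof -
    have bc: "AE \<omega> in M. \<forall>j::nat. eventually (\<lambda>jj. \<forall>T0. \<exists>T\<ge>T0.
      \<bar>Wp h k (\<pi> k) (real ((Suc jj)\<^sup>2)) T (XP X \<omega>) (XP Y \<omega>)\<bar> \<le> 1 / real (Suc j) * real ((Suc jj)\<^sup>2)) sequentially"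
    proof (subst AE_all_countable, intro allI)
      fix j :: nat
      show "AE \<omega> in M. eventually (\<lambda>jj. \<forall>T0. \<exists>T\<ge>T0.
        \<bar>Wp h k (\<pi> k) (real ((Suc jj)\<^sup>2)) T (XP X \<omega>) (XP Y \<omega>)\<bar> \<le> 1 / real (Suc j) * real ((Suc jj)\<^sup>2)) sequentially"
        using I.W_BC[where \<epsilon>="1 / real (Suc j)" and h=h and k=k] by simp
    qed
    show ?thesis
      using bc I.inf_ones[of h] Sinf_lim[of h] AE_space
    proof eventually_elim
      case (elim \<omega>)
      have x: "\<And>i. XP X \<omega> i h \<in> {0,1}" using X_01[OF elim(4)] by (simp add: XP_def)
      have y: "\<And>i. XP Y \<omega> i k \<in> {0,1}" using Y_01[OF elim(4)] by (simp add: XP_def)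
      have inf: "\<forall>T. \<exists>i>T. XP X \<omega> i h \<noteq> 0" using elim(2) by (simp add: XP_def)
      have Slim: "filterlim (Sp h (XP X \<omega>)) at_top sequentially" by (rule det_inf[where xf="XP X \<omega>" and h=h, OF x inf])
      have DS: "(\<lambda>t. (\<Sum>n=1..t. XP X \<omega> n h * (XP Y \<omega> n k - \<pi> k)) / Sp h (XP X \<omega>) t) \<longlonglongrightarrow> 0"
        by (rule det_main[where xf="XP X \<omega>" and h=h and yf="XP Y \<omega>" and k=k, OF x y _ _ Slim]) (use A3_pi[of k] elim(1) in auto)
      have Seq: "Sp h (XP X \<omega>) t = (\<Sum>n=1..t. X n h \<omega>)" for t by (simp add: Sp_def XP_def)
      define S where "S = (\<lambda>t. (\<Sum>n=1..t. X n h \<omega>))"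
      define D where "D = (\<lambda>t. (\<Sum>n=1..t. X n h \<omega> * (Y n k \<omega> - \<pi> k)))"
      have DS': "(\<lambda>t. D t / S t) \<longlonglongrightarrow> 0" using DS by (simp add: D_def S_def XP_def Sp_def)
      have SL: "(\<lambda>t. S t / real t powr ?g) \<longlonglongrightarrow> Sinf h \<omega>" using elim(3) by (simp add: S_def)
      have ev: "eventually (\<lambda>t. S t > 0) sequentially"
        using Slim unfolding filterlim_at_top_dense Seq S_def by blast
      have "(\<lambda>t. D t / S t * (S t / real t powr ?g)) \<longlonglongrightarrow> 0 * Sinf h \<omega>"
        by (rule tendsto_mult[OF DS' SL])
      then have "(\<lambda>t. D t / S t * (S t / real t powr ?g)) \<longlonglongrightarrow> 0" by simp
      moreover have "eventually (\<lambda>t. D t / S t * (S t / real t powr ?g) = D t / real t powr ?g) sequentially"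
        using ev by (rule eventually_mono) simp
      ultimately have "(\<lambda>t. D t / real t powr ?g) \<longlonglongrightarrow> 0"
        by (rule Lim_transform_eventually)
      then have "(\<lambda>t. \<pi> k * (S t / real t powr ?g) + D t / real t powr ?g) \<longlonglongrightarrow> \<pi> k * Sinf h \<omega> + 0"
        by (intro tendsto_add tendsto_mult tendsto_const SL)
      moreover have "(\<Sum>n=1..t. X n h \<omega> * Y n k \<omega>) / real t powr ?g = \<pi> k * (S t / real t powr ?g) + D t / real t powr ?g" for t
      proof -
        have "(\<Sum>n=1..t. X n h \<omega> * Y n k \<omega>) = \<pi> k * S t + D t"
          by (simp add: S_def D_def sum_distrib_left sum.distrib[symmetric] algebra_simps)
        then show ?thesis by (simp add: add_divide_distrib)
      qed
      ultimately show ?case by simp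
    qed
  qed
  have P2: "AE \<omega> in M.
            (\<lambda>t. (\<Sum>n=1..t. X n h \<omega> * Y n k \<omega>) / (\<Sum>n=1..t. X n h \<omega> * Y n j \<omega>))
              \<longlonglongrightarrow> \<pi> k / \<pi> j" for k j h
    using P1[of h k] P1[of h j] Sinf_pos[of h]
  proof eventually_elim
    case (elim \<omega>)
    define A where "A = (\<lambda>t. (\<Sum>n=1..t. X n h \<omega> * Y n k \<omega>))"
    define B where "B = (\<lambda>t. (\<Sum>n=1..t. X n h \<omega> * Y n j \<omega>))"
    have nz: "\<pi> j * Sinf h \<omega> \<noteq> 0" using A3_pi[of j] elim(3) by simp
    have "(\<lambda>t. (A t / real t powr ?g) / (B t / real t powr ?g)) \<longlonglongrightarrow> (\<pi> k * Sinf h \<omega>) / (\<pi> j * Sinf h \<omega>)"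
    proof -
      have LA: "(\<lambda>t. A t / real t powr ?g) \<longlonglongrightarrow> \<pi> k * Sinf h \<omega>" using elim(1) by (simp add: A_def)
      have LB: "(\<lambda>t. B t / real t powr ?g) \<longlonglongrightarrow> \<pi> j * Sinf h \<omega>" using elim(2) by (simp add: B_def)
      show ?thesis by (rule tendsto_divide[OF LA LB nz])
    qed
    moreover have "(\<pi> k * Sinf h \<omega>) / (\<pi> j * Sinf h \<omega>) = \<pi> k / \<pi> j" using elim(3) by simp
    ultimately have L: "(\<lambda>t. (A t / real t powr ?g) / (B t / real t powr ?g)) \<longlonglongrightarrow> \<pi> k / \<pi> j" by simp
    have E: "eventually (\<lambda>t. (A t / real t powr ?g) / (B t / real t powr ?g) = A t / B t) sequentially"
    proof (rule eventually_mono[OF eventually_ge_at_top[of 1]])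
      fix t :: nat assume "t \<ge> 1"
      then have "real t powr ?g \<noteq> 0" by simp
      then show "(A t / real t powr ?g) / (B t / real t powr ?g) = A t / B t"
        by (rule div_cancel_common)
    qed
    have "(\<lambda>t. A t / B t) \<longlonglongrightarrow> \<pi> k / \<pi> j" by (rule Lim_transform_eventually[OF L E])
    then show ?case by (simp add: A_def B_def)
  qed
  show ?thesis using P1 P2 by blast
qed

end
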